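(* Let $(\mathbb{X},d)$ be a geodesic metric space and let $\varrho$ be a continuous admissible radius function in a bounded domain $\Omega\subset\mathbb{X}$. Let $u\in C(\overline\Omega)$ and let $K\subset\Omega$ be compact. If $\omega$ is a concave modulus of continuity for $u$ on $\widetilde K$ (i.e. $|u(s)-u(t)|\le\omega(d(s,t))$ for all $s,t\in\widetilde K$), then for all $x,y\in K$, $$|\mathcal{S}u(x)-\mathcal{S}u(y)|\leq\omega\left(\widehat\omega_\varrho(d(x,y))\right).$$
   Context: A metric space is geodesic if any two points $x,y$ are joined by a curve of length $d(x,y)$. An admissible radius function in $\Omega$ is $\varrho\in C(\overline\Omega)$, $\varrho\ge0$, with $0<\varrho(x)\leq\mathrm{dist}(x,\partial\Omega)$ for $x\in\Omega$ and $\varrho=0$ exactly on $\partial\Omega$. $B_x=\overline{B}(x,\varrho(x))$, $\widetilde K=\bigcup_{x\in K}B_x$, and $\mathcal{S}u(x)=\frac12(\sup_{B_x}u+\inf_{B_x}u)$. A modulus of continuity is a nondecreasing continuous $\omega:[0,\mathrm{diam}\,\Omega]\to[0,\infty)$ with $\omega(0)=0$. Fix a concave modulus of continuity $\omega_{\varrho,\Omega}$ for $\varrho$ on $\Omega$ with $\omega_{\varrho,\Omega}(\mathrm{diam}\,\Omega)\le\mathrm{diam}\,\Omega$; set $\widehat\omega_\varrho(t)=t$ if $\omega_{\varrho,\Omega}(t)\le t$ for all $t\in[0,\mathrm{diam}\,\Omega]$, and otherwise $\widehat\omega_\varrho(t)=\frac{\mathrm{diam}\,\Omega}{\omega_{\varrho,\Omega}(\mathrm{diam}\,\Omega)}\omega_{\varrho,\Omega}(t)$.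 *)

theory Defs
  imports "HOL-Analysis.Analysis"
begin

text \<open>Length of a curve \<gamma> : [a,b] \<rightarrow> X in a metric space: supremum over all
  partitions a = t_0 \<le> t_1 \<le> ... \<le> t_n = b of the sums of distances (in ereal,
  so that non-rectifiable curves have length \<infinity>).\<close>
definition curve_length :: "(real \<Rightarrow> 'a::metric_space) \<Rightarrow> real \<Rightarrow> real \<Rightarrow> ereal" where
  "curve_length \<gamma> a b =
     Sup {ereal (\<Sum>i<n. dist (\<gamma> (t i)) (\<gamma> (t (Suc i)))) | n t.
            t 0 = a \<and> t n = b \<and> (\<forall>i<n. t i \<le> t (Suc i))}"

definition geodesic_space :: "'a::metric_space itself \<Rightarrow> bool" where
  "geodesic_space _ \<longleftrightarrow>
     (\<forall>x y::'a. \<exists>\<gamma> a b. a \<le> b \<and> continuous_on {a..b} \<gamma> \<and> \<gamma> a = x \<and> \<gamma> b = y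
        \<and> curve_length \<gamma> a b = ereal (dist x y))"

definition domain :: "'a::metric_space set \<Rightarrow> bool" where
  "domain \<Omega> \<longleftrightarrow> open \<Omega> \<and> connected \<Omega> \<and> \<Omega> \<noteq> {}"

text \<open>Admissible radius function (dist(x, \<partial>\<Omega>) is the infimum over the boundary,
  with the convention inf of the empty set = +\<infinity>).\<close>
definition admissible_radius :: "'a::metric_space set \<Rightarrow> ('a \<Rightarrow> real) \<Rightarrow> bool" where
  "admissible_radius \<Omega> \<rho> \<longleftrightarrow>
     continuous_on (closure \<Omega>) \<rho> \<and>
     (\<forall>x\<in>closure \<Omega>. 0 \<le> \<rho> x) \<and>
     (\<forall>x\<in>\<Omega>. 0 < \<rho> x \<and> (\<forall>z\<in>frontier \<Omega>. \<rho> x \<le> dist x z)) \<and>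
     (\<forall>x\<in>closure \<Omega>. \<rho> x = 0 \<longleftrightarrow> x \<in> frontier \<Omega>)"

definition ball_of :: "('a::metric_space \<Rightarrow> real) \<Rightarrow> 'a \<Rightarrow> 'a set" where
  "ball_of \<rho> x = cball x (\<rho> x)"

definition tilde :: "('a::metric_space \<Rightarrow> real) \<Rightarrow> 'a set \<Rightarrow> 'a set" where
  "tilde \<rho> K = (\<Union>x\<in>K. ball_of \<rho> x)"

definition S_op :: "('a::metric_space \<Rightarrow> real) \<Rightarrow> ('a \<Rightarrow> real) \<Rightarrow> 'a \<Rightarrow> real" where
  "S_op \<rho> u x = (Sup (u ` ball_of \<rho> x) + Inf (u ` ball_of \<rho> x)) / 2"

definition modulus_of_continuity :: "real \<Rightarrow> (real \<Rightarrow> real) \<Rightarrow> bool" where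
  "modulus_of_continuity D \<omega> \<longleftrightarrow>
     mono_on {0..D} \<omega> \<and> continuous_on {0..D} \<omega> \<and> \<omega> 0 = 0 \<and> (\<forall>t\<in>{0..D}. 0 \<le> \<omega> t)"

definition omega_hat :: "real \<Rightarrow> (real \<Rightarrow> real) \<Rightarrow> real \<Rightarrow> real" where
  "omega_hat D \<omega>\<rho> t =
     (if \<forall>s\<in>{0..D}. \<omega>\<rho> s \<le> s then t else D / \<omega>\<rho> D * \<omega>\<rho> t)"

end

theory Submission
  imports Defs
begin


lemma curve_split:
  fixes \<gamma> :: "real \<Rightarrow> 'a::metric_space"
  assumes "a \<le> t" "t \<le> b"
  shows "ereal (dist (\<gamma> a) (\<gamma> t) + dist (\<gamma> t) (\<gamma> b)) \<le> curve_length \<gamma> a b"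
proof -
  define tt where "tt = (\<lambda>i::nat. if i = 0 then a else if i = 1 then t else b)"
  have "(\<Sum>i<2. dist (\<gamma> (tt i)) (\<gamma> (tt (Suc i)))) = dist (\<gamma> a) (\<gamma> t) + dist (\<gamma> t) (\<gamma> b)"
    by (simp add: tt_def numeral_2_eq_2)
  moreover have "tt 0 = a \<and> tt 2 = b \<and> (\<forall>i<2. tt i \<le> tt (Suc i))"
    using assms by (auto simp: tt_def less_2_cases_iff)
  ultimately show ?thesis unfolding curve_length_def
    apply (intro Sup_upper CollectI)
    apply (rule exI[of _ 2], rule exI[of _ tt])
    by simp
qed

lemma geo_tri:
  fixes x y :: "'a::metric_space"
  assumes "geodesic_space TYPE('a)"
  obtains \<gamma> :: "real \<Rightarrow> 'a" and a b :: real where "a \<le> b" "continuous_on {a..b} \<gamma>" "\<gamma> a = x" "\<gamma> b = y"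
    "\<And>t. a \<le> t \<Longrightarrow> t \<le> b \<Longrightarrow> dist x (\<gamma> t) + dist (\<gamma> t) y \<le> dist x y"
proof -
  obtain \<gamma> a b where g: "a \<le> b" "continuous_on {a..b} \<gamma>" "\<gamma> a = x" "\<gamma> b = y"
    "curve_length \<gamma> a b = ereal (dist x y)"
    using assms unfolding geodesic_space_def by blast
  show ?thesis
  proof (rule that[OF g(1-4)])
    fix t assume "a \<le> t" "t \<le> b"
    from curve_split[OF this, of \<gamma>] g show "dist x (\<gamma> t) + dist (\<gamma> t) y \<le> dist x y" by simp
  qed
qed

lemma approx:
  fixes y z :: "'a::metric_space"
  assumes "geodesic_space TYPE('a)" "0 \<le> s"
  shows "\<exists>z'. dist y z' \<le> s \<and> dist z z' \<le> max 0 (dist y z - s)"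
proof (cases "dist y z \<le> s")
  case True then show ?thesis by (intro exI[of _ z]) auto
next
  case False
  obtain a b :: real and \<gamma> :: "real \<Rightarrow> 'a" where g: "a \<le> b" "continuous_on {a..b} \<gamma>" "\<gamma> a = y" "\<gamma> b = z"
    "\<And>t. a \<le> t \<Longrightarrow> t \<le> b \<Longrightarrow> dist y (\<gamma> t) + dist (\<gamma> t) z \<le> dist y z"
    by (rule geo_tri[OF assms(1), of y z]) blast
  have "continuous_on {a..b} (\<lambda>t. dist y (\<gamma> t))"
    by (intro continuous_intros g(2))
  then obtain t where t: "a \<le> t" "t \<le> b" "dist y (\<gamma> t) = s"
    using IVT'[of "\<lambda>t. dist y (\<gamma> t)" a s b] g False assms by auto
  show ?thesis using g(5)[OF t(1,2)] t by (intro exI[of _ "\<gamma> t"]) (auto simp: dist_commute)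
qed

lemma cball_closure:
  fixes z :: "'a::metric_space"
  assumes "geodesic_space TYPE('a)" "x \<in> \<Omega>"
    "\<forall>w\<in>frontier \<Omega>. r \<le> dist x w" "dist x z \<le> r"
  shows "z \<in> closure \<Omega>"
proof (rule ccontr)
  assume nz: "z \<notin> closure \<Omega>"
  obtain a b :: real and \<gamma> :: "real \<Rightarrow> 'a" where g: "a \<le> b" "continuous_on {a..b} \<gamma>" "\<gamma> a = x" "\<gamma> b = z"
    "\<And>t. a \<le> t \<Longrightarrow> t \<le> b \<Longrightarrow> dist x (\<gamma> t) + dist (\<gamma> t) z \<le> dist x z"
    by (rule geo_tri[OF assms(1), of x z]) blast
  have "connected (\<gamma> ` {a..b})" by (intro connected_continuous_image g(2)) simp
  moreover have "x \<in> \<gamma> ` {a..b} \<inter> \<Omega>" using g assms by force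
  moreover have "z \<in> \<gamma> ` {a..b} - \<Omega>" using g nz closure_subset by force
  ultimately obtain w where w: "w \<in> \<gamma> ` {a..b}" "w \<in> frontier \<Omega>"
    using connected_Int_frontier[of "\<gamma> ` {a..b}" \<Omega>] by blast
  then obtain t where t: "a \<le> t" "t \<le> b" "w = \<gamma> t" by auto
  have "r \<le> dist x w" using assms w by auto
  with g(5)[OF t(1,2)] t assms have "dist w z = 0" by (smt (verit) zero_le_dist)
  then have "w = z" by simp
  with w nz show False by (simp add: frontier_def)
qed


theorem lemma3p12:
  fixes \<Omega> K :: "'a::metric_space set"
    and \<rho> u :: "'a \<Rightarrow> real"
    and \<omega>\<rho> \<omega> :: "real \<Rightarrow> real"
  assumes "geodesic_space TYPE('a)"
    and "domain \<Omega>" and "bounded \<Omega>"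
    and "admissible_radius \<Omega> \<rho>"
    and "modulus_of_continuity (diameter \<Omega>) \<omega>\<rho>"
    and "concave_on {0..diameter \<Omega>} \<omega>\<rho>"
    and "\<forall>x\<in>\<Omega>. \<forall>y\<in>\<Omega>. \<bar>\<rho> x - \<rho> y\<bar> \<le> \<omega>\<rho> (dist x y)"
    and "\<omega>\<rho> (diameter \<Omega>) \<le> diameter \<Omega>"
    and "continuous_on (closure \<Omega>) u"
    and "compact K" and "K \<subseteq> \<Omega>"
    and "modulus_of_continuity (diameter \<Omega>) \<omega>"
    and "concave_on {0..diameter \<Omega>} \<omega>"
    and "\<forall>s\<in>tilde \<rho> K. \<forall>t\<in>tilde \<rho> K. \<bar>u s - u t\<bar> \<le> \<omega> (dist s t)"
  shows "\<forall>x\<in>K. \<forall>y\<in>K.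
           \<bar>S_op \<rho> u x - S_op \<rho> u y\<bar> \<le> \<omega> (omega_hat (diameter \<Omega>) \<omega>\<rho> (dist x y))"
proof (intro ballI)
  fix x y assume xK: "x \<in> K" and yK: "y \<in> K"
  define D where "D = diameter \<Omega>"
  define B where "B = (\<lambda>p. cball p (\<rho> p))"
  note adm = assms(4)[unfolded admissible_radius_def]
  have KO: "\<And>p. p \<in> K \<Longrightarrow> p \<in> \<Omega>" using assms(11) by auto
  have bcl: "bounded (closure \<Omega>)" using assms(3) by (rule bounded_closure)
  have distD: "\<And>p q. p \<in> closure \<Omega> \<Longrightarrow> q \<in> closure \<Omega> \<Longrightarrow> dist p q \<le> D"
    using diameter_bounded_bound[OF bcl] diameter_closure[OF assms(3)] D_def by metis
  have rpos: "\<And>p. p \<in> K \<Longrightarrow> 0 < \<rho> p" using adm KO by blast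
  have Bcl: "\<And>p z. p \<in> K \<Longrightarrow> z \<in> B p \<Longrightarrow> z \<in> closure \<Omega>"
  proof -
    fix p z assume "p \<in> K" "z \<in> B p"
    then show "z \<in> closure \<Omega>"
      using cball_closure[OF assms(1), of p \<Omega> "\<rho> p" z] adm KO unfolding B_def by auto
  qed
  have Btil: "\<And>p z. p \<in> K \<Longrightarrow> z \<in> B p \<Longrightarrow> z \<in> tilde \<rho> K"
    unfolding tilde_def ball_of_def B_def by blast
  have pB: "\<And>p. p \<in> K \<Longrightarrow> p \<in> B p" using rpos unfolding B_def by (simp add: less_imp_le)
  have D0: "0 \<le> D" using distD[OF Bcl[OF xK pB[OF xK]] Bcl[OF xK pB[OF xK]]] by simp
  have wmono: "\<And>s t. 0 \<le> s \<Longrightarrow> s \<le> t \<Longrightarrow> t \<le> D \<Longrightarrow> \<omega> s \<le> \<omega> t"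
    using assms(12) unfolding modulus_of_continuity_def D_def
    by (meson atLeastAtMost_iff mono_onD order_trans)
  have uclose: "\<And>p q z z' c. p \<in> K \<Longrightarrow> q \<in> K \<Longrightarrow> z \<in> B p \<Longrightarrow> z' \<in> B q \<Longrightarrow>
      dist z z' \<le> c \<Longrightarrow> c \<le> D \<Longrightarrow> \<bar>u z - u z'\<bar> \<le> \<omega> c"
  proof -
    fix p q z z' c assume h: "p \<in> K" "q \<in> K" "z \<in> B p" "z' \<in> B q" "dist z z' \<le> c" "c \<le> D"
    have "\<bar>u z - u z'\<bar> \<le> \<omega> (dist z z')" using assms(14) Btil h by blast
    also have "\<dots> \<le> \<omega> c" using wmono[of "dist z z'" c] h by simp
    finally show "\<bar>u z - u z'\<bar> \<le> \<omega> c" .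
  qed
  have bdd: "\<And>p. p \<in> K \<Longrightarrow> bdd_above (u ` B p) \<and> bdd_below (u ` B p)"
  proof -
    fix p assume p: "p \<in> K"
    have "\<forall>z\<in>B p. \<bar>u z - u p\<bar> \<le> \<omega> D"
      using uclose[OF p p _ pB[OF p] _ order_refl] distD Bcl[OF p] pB[OF p] by blast
    then have "\<forall>z\<in>B p. u z \<le> u p + \<omega> D \<and> u p - \<omega> D \<le> u z" by (auto simp: abs_le_iff)
    then show "bdd_above (u ` B p) \<and> bdd_below (u ` B p)"
      by (auto intro: bdd_aboveI2 bdd_belowI2)
  qed
  define c where "c = (\<lambda>p q. min D (max 0 (dist p q + \<rho> p - \<rho> q)))"
  have c0: "\<And>p q. 0 \<le> c p q \<and> c p q \<le> D" using D0 unfolding c_def by auto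
  have key: "\<And>p q z. p \<in> K \<Longrightarrow> q \<in> K \<Longrightarrow> z \<in> B p \<Longrightarrow> \<exists>z'\<in>B q. \<bar>u z - u z'\<bar> \<le> \<omega> (c p q)"
  proof -
    fix p q z assume h: "p \<in> K" "q \<in> K" "z \<in> B p"
    obtain z' where z': "dist q z' \<le> \<rho> q" "dist z z' \<le> max 0 (dist q z - \<rho> q)"
      using approx[OF assms(1), of "\<rho> q" q z] rpos[OF h(2)] by auto
    have z'B: "z' \<in> B q" using z' unfolding B_def by simp
    have "dist q z \<le> dist q p + dist p z" by (rule dist_triangle)
    moreover have "dist p z \<le> \<rho> p" using h(3) unfolding B_def by simp
    ultimately have "dist z z' \<le> max 0 (dist p q + \<rho> p - \<rho> q)" using z'(2)
      by (simp add: dist_commute)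
    moreover have "dist z z' \<le> D" using distD Bcl h z'B by blast
    ultimately have "dist z z' \<le> c p q" unfolding c_def by simp
    then show "\<exists>z'\<in>B q. \<bar>u z - u z'\<bar> \<le> \<omega> (c p q)"
      using uclose[OF h(1,2,3) z'B] c0 z'B by blast
  qed
  have Bne: "\<And>p. p \<in> K \<Longrightarrow> B p \<noteq> {}" using pB by blast
  have supi: "\<And>p q. p \<in> K \<Longrightarrow> q \<in> K \<Longrightarrow> Sup (u ` B p) \<le> Sup (u ` B q) + \<omega> (c p q)"
  proof -
    fix p q assume h: "p \<in> K" "q \<in> K"
    show "Sup (u ` B p) \<le> Sup (u ` B q) + \<omega> (c p q)"
    proof (rule cSUP_least[OF Bne[OF h(1)]])
      fix z assume z: "z \<in> B p"
      obtain z' where z': "z' \<in> B q" "\<bar>u z - u z'\<bar> \<le> \<omega> (c p q)" using key[OF h z] by blast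
      have "u z' \<le> Sup (u ` B q)" using cSUP_upper[OF z'(1)] bdd[OF h(2)] by blast
      then show "u z \<le> Sup (u ` B q) + \<omega> (c p q)" using z'(2) by (auto simp: abs_le_iff)
    qed
  qed
  have infi: "\<And>p q. p \<in> K \<Longrightarrow> q \<in> K \<Longrightarrow> Inf (u ` B q) \<le> Inf (u ` B p) + \<omega> (c p q)"
  proof -
    fix p q assume h: "p \<in> K" "q \<in> K"
    have "Inf (u ` B q) - \<omega> (c p q) \<le> Inf (u ` B p)"
    proof (rule cINF_greatest[OF Bne[OF h(1)]])
      fix z assume z: "z \<in> B p"
      obtain z' where z': "z' \<in> B q" "\<bar>u z - u z'\<bar> \<le> \<omega> (c p q)" using key[OF h z] by blast
      have "Inf (u ` B q) \<le> u z'" using cINF_lower[OF _ z'(1)] bdd[OF h(2)] by blast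
      then show "Inf (u ` B q) - \<omega> (c p q) \<le> u z" using z'(2) by (auto simp: abs_le_iff)
    qed
    then show "Inf (u ` B q) \<le> Inf (u ` B p) + \<omega> (c p q)" by simp
  qed
  have S: "\<And>p. S_op \<rho> u p = (Sup (u ` B p) + Inf (u ` B p)) / 2"
    unfolding S_op_def ball_of_def B_def by simp
  have absS: "\<bar>S_op \<rho> u x - S_op \<rho> u y\<bar> \<le> (\<omega> (c x y) + \<omega> (c y x)) / 2"
    using supi[OF xK yK] supi[OF yK xK] infi[OF xK yK] infi[OF yK xK] unfolding S
    by (simp add: abs_le_iff field_simps)
  have conc: "(\<omega> (c x y) + \<omega> (c y x)) / 2 \<le> \<omega> ((c x y + c y x) / 2)"
  proof -
    have "(1 - 1/2) * \<omega> (c x y) + (1/2) * \<omega> (c y x) \<le> \<omega> ((1 - 1/2) *\<^sub>R c x y + (1/2) *\<^sub>R c y x)"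
      by (rule concave_onD[OF assms(13)]) (use c0 in \<open>auto simp: D_def\<close>)
    then show ?thesis by (simp add: field_simps)
  qed
  define d where "d = dist x y"
  define e where "e = omega_hat D \<omega>\<rho> d"
  have d0: "0 \<le> d" "d \<le> D" unfolding d_def using distD Bcl xK yK pB by auto
  have mr: "modulus_of_continuity D \<omega>\<rho>" using assms(5) D_def by simp
  have rmono: "\<And>s t. 0 \<le> s \<Longrightarrow> s \<le> t \<Longrightarrow> t \<le> D \<Longrightarrow> \<omega>\<rho> s \<le> \<omega>\<rho> t"
    using mr unfolding modulus_of_continuity_def
    by (meson atLeastAtMost_iff mono_onD order_trans)
  have rnn: "0 \<le> \<omega>\<rho> d" using mr d0 unfolding modulus_of_continuity_def by auto
  have r00: "\<omega>\<rho> 0 = 0" using mr unfolding modulus_of_continuity_def by auto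
  have eprops: "d \<le> e \<and> \<omega>\<rho> d \<le> e \<and> e \<le> D"
  proof (cases "\<forall>s\<in>{0..D}. \<omega>\<rho> s \<le> s")
    case True
    then have "e = d" unfolding e_def omega_hat_def by simp
    then show ?thesis using True d0 by auto
  next
    case False
    then obtain s where s: "0 \<le> s" "s \<le> D" "s < \<omega>\<rho> s" by auto
    define W where "W = \<omega>\<rho> D"
    have Wpos: "0 < W" using rmono[OF s(1,2) order_refl] s W_def by linarith
    have WD: "W \<le> D" using assms(8) W_def D_def by simp
    have Dpos: "0 < D" using Wpos WD by linarith
    have ee: "e = D / W * \<omega>\<rho> d" unfolding e_def omega_hat_def W_def using False by (simp only: if_False)
    have "(1 - d/D) * \<omega>\<rho> 0 + (d/D) * \<omega>\<rho> D \<le> \<omega>\<rho> ((1 - d/D) *\<^sub>R 0 + (d/D) *\<^sub>R D)"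
      by (rule concave_onD[OF assms(6)]) (use d0 Dpos in \<open>auto simp: D_def\<close>)
    then have "d / D * W \<le> \<omega>\<rho> d" using r00 Dpos W_def by simp
    then have "d * W \<le> D * \<omega>\<rho> d" using Dpos by (simp add: field_simps)
    then have 1: "d \<le> e" unfolding ee using Wpos by (simp add: field_simps)
    have "\<omega>\<rho> d \<le> W" using rmono[OF d0(1,2) order_refl] W_def by simp
    then have 2: "e \<le> D" unfolding ee using Wpos Dpos by (simp add: field_simps)
    have "1 * \<omega>\<rho> d \<le> D / W * \<omega>\<rho> d" using WD Wpos rnn
      by (intro mult_right_mono) (simp_all add: field_simps)
    then have 3: "\<omega>\<rho> d \<le> e" unfolding ee by simp
    show ?thesis using 1 2 3 by blast
  qed
  have dl: "\<bar>\<rho> x - \<rho> y\<bar> \<le> \<omega>\<rho> d" using assms(7) KO xK yK unfolding d_def by blast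
  have "c x y \<le> max 0 (d + (\<rho> x - \<rho> y))" "c y x \<le> max 0 (d - (\<rho> x - \<rho> y))"
    unfolding c_def d_def by (auto simp: dist_commute)
  then have ce: "(c x y + c y x) / 2 \<le> e" using eprops dl d0 by (auto simp: max_def abs_if split: if_splits)
  have "\<omega> ((c x y + c y x) / 2) \<le> \<omega> e"
    using wmono[OF _ ce] c0[of x y] c0[of y x] eprops by simp
  then show "\<bar>S_op \<rho> u x - S_op \<rho> u y\<bar> \<le> \<omega> (omega_hat (diameter \<Omega>) \<omega>\<rho> (dist x y))"
    using absS conc unfolding e_def d_def D_def by linarith
qed

end
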